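(* For all integers $k\ge 2$ and $\ell\ge1$ there exist a finite point set $X\subseteq\mathbb{R}^d$ and a rule $\mathcal{R}$ such that general $k$-means++ with parameters $k,\ell$ and rule $\mathcal{R}$, run on $X$, outputs with constant probability (bounded below by an absolute constant) a set $C$ of centers with $\phi(X,C)\ge \Omega(k^{1-1/\ell})\cdot\mathrm{OPT}_k(X)$.
   Context: For $x\in\mathbb{R}^d$ and finite $C\subseteq\mathbb{R}^d$, $\phi(x,C)=\min_{c\in C}\|x-c\|_2^2$, $\phi(Y,C)=\sum_{x\in Y}\phi(x,C)$; $\mathrm{OPT}_k(X)$ is the minimum of $\phi(X,C)$ over all $C\subseteq\mathbb{R}^d$ with $|C|=k$. A rule $\mathcal{R}$ is any (possibly randomized) procedure that, given $X$, the current center set, $k$, $\ell$ and $\ell$ candidate points $x_1,\dots,x_\ell$, selects one of the candidates. General $k$-means++ with rule $\mathcal{R}$: sample $x_1,\dots,x_\ell\in X$ independently uniformly, let $\mathcal{R}$ select one of them as $c_1$, $C_1=\{c_1\}$; for $i=1,\dots,k-1$ sample $c_{i+1}^1,\dots,c_{i+1}^\ell\in X$ independently, each equal to $x$ with probability $\phi(x,C_i)/\phi(X,C_i)$, let $\mathcal{R}$ select $c_{i+1}$ among them, and set $C_{i+1}=C_i\cup\{c_{i+1}\}$; output $C_k$. *)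

theory Defs
  imports "HOL-Probability.Probability"
begin

type_synonym point = "nat \<Rightarrow> real"

text \<open>R^d is rendered as the functions nat => real vanishing outside {..<d}.\<close>
definition Rd :: "nat \<Rightarrow> point set" where
  "Rd d = {x. \<forall>i\<ge>d. x i = 0}"

definition sqdist :: "nat \<Rightarrow> point \<Rightarrow> point \<Rightarrow> real" where
  "sqdist d x c = (\<Sum>i<d. (x i - c i)^2)"

definition phi_pt :: "nat \<Rightarrow> point \<Rightarrow> point set \<Rightarrow> real" where
  "phi_pt d x C = Min (sqdist d x ` C)"

definition phi :: "nat \<Rightarrow> point set \<Rightarrow> point set \<Rightarrow> real" where
  "phi d Y C = (\<Sum>x\<in>Y. phi_pt d x C)"

definition OPT :: "nat \<Rightarrow> nat \<Rightarrow> point set \<Rightarrow> real" where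
  "OPT d k X = Inf {phi d X C | C. C \<subseteq> Rd d \<and> finite C \<and> card C = k}"

text \<open>D^2-sampling: x is drawn with probability phi(x,C)/phi(X,C).
  (Convention for the degenerate case phi(X,C) = 0: uniform on X.)\<close>
definition d2_pmf :: "nat \<Rightarrow> point set \<Rightarrow> point set \<Rightarrow> point pmf" where
  "d2_pmf d X C = (if phi d X C = 0 then pmf_of_set X
     else embed_pmf (\<lambda>x. if x \<in> X then phi_pt d x C / phi d X C else 0))"

text \<open>A rule: given X, current centers, k, l and the candidate list, it (possibly
  randomly) selects one of the candidates.\<close>
type_synonym rule = "point set \<Rightarrow> point set \<Rightarrow> nat \<Rightarrow> nat \<Rightarrow> point list \<Rightarrow> point pmf"

definition valid_rule :: "rule \<Rightarrow> bool" where
  "valid_rule R \<longleftrightarrow> (\<forall>X C k l xs. xs \<noteq> [] \<longrightarrow> set_pmf (R X C k l xs) \<subseteq> set xs)"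

definition kmpp_step :: "nat \<Rightarrow> rule \<Rightarrow> point set \<Rightarrow> nat \<Rightarrow> nat \<Rightarrow> point set \<Rightarrow> point set pmf" where
  "kmpp_step d R X k l C =
     bind_pmf (replicate_pmf l (d2_pmf d X C)) (\<lambda>xs.
     bind_pmf (R X C k l xs) (\<lambda>c. return_pmf (insert c C)))"

definition kmpp :: "nat \<Rightarrow> rule \<Rightarrow> point set \<Rightarrow> nat \<Rightarrow> nat \<Rightarrow> point set pmf" where
  "kmpp d R X k l =
     bind_pmf (replicate_pmf l (pmf_of_set X)) (\<lambda>xs.
     bind_pmf (R X {} k l xs) (\<lambda>c1.
       ((\<lambda>M. bind_pmf M (kmpp_step d R X k l)) ^^ (k - 1)) (return_pmf {c1})))"

end

theory Submission imports Defs begin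


lemma prob_bind_pmf:
  "measure_pmf.prob (bind_pmf M f) A = measure_pmf.expectation M (\<lambda>x. measure_pmf.prob (f x) A)"
proof -
  have "ennreal (measure_pmf.prob (bind_pmf M f) A) = emeasure (measure_pmf (bind_pmf M f)) A"
    by (simp add: measure_pmf.emeasure_eq_measure)
  also have "\<dots> = (\<integral>\<^sup>+x. emeasure (measure_pmf (f x)) A \<partial>M)" by simp
  also have "\<dots> = (\<integral>\<^sup>+x. ennreal (measure_pmf.prob (f x) A) \<partial>M)"
    by (simp add: measure_pmf.emeasure_eq_measure)
  also have "\<dots> = ennreal (measure_pmf.expectation M (\<lambda>x. measure_pmf.prob (f x) A))"
    by (rule nn_integral_eq_integral)
       (auto intro!: measure_pmf.integrable_const_bound[where B=1])
  finally show ?thesis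
    by (simp add: ennreal_inj integral_nonneg_AE)
qed

lemma replicate_pmf_all:
  "measure_pmf.prob (replicate_pmf n p) {xs. set xs \<subseteq> A} = measure_pmf.prob p A ^ n"
proof (induction n)
  case 0
  then show ?case by (simp add: indicator_def)
next
  case (Suc n)
  have "measure_pmf.prob (replicate_pmf (Suc n) p) {xs. set xs \<subseteq> A}
      = measure_pmf.expectation p (\<lambda>x. measure_pmf.prob (replicate_pmf n p \<bind> (\<lambda>xs. return_pmf (x # xs))) {xs. set xs \<subseteq> A})"
    by (simp add: prob_bind_pmf)
  also have "\<dots> = measure_pmf.expectation p (\<lambda>x. indicator A x * measure_pmf.prob p A ^ n)"
  proof (rule Bochner_Integration.integral_cong[OF refl])
    fix x
    have "replicate_pmf n p \<bind> (\<lambda>xs. return_pmf (x # xs)) = map_pmf ((#) x) (replicate_pmf n p)"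
      by (simp add: map_pmf_def)
    moreover have "((#) x) -` {xs. set xs \<subseteq> A} = (if x \<in> A then {xs. set xs \<subseteq> A} else {})"
      by auto
    ultimately show "measure_pmf.prob (replicate_pmf n p \<bind> (\<lambda>xs. return_pmf (x # xs))) {xs. set xs \<subseteq> A}
        = indicator A x * measure_pmf.prob p A ^ n"
      using Suc.IH by (simp add: indicator_def)
  qed
  also have "\<dots> = measure_pmf.prob p A * measure_pmf.prob p A ^ n"
    by simp
  finally show ?case by simp
qed



lemma funpow_bind:
  "((\<lambda>M. bind_pmf M (s :: 'a \<Rightarrow> 'a pmf)) ^^ n) M = bind_pmf M (\<lambda>C. ((\<lambda>M. bind_pmf M s) ^^ n) (return_pmf C))"
proof (induction n arbitrary: M)
  case 0
  show ?case by (simp only: funpow_0 bind_return_pmf')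
next
  case (Suc n)
  have "((\<lambda>M. bind_pmf M s) ^^ Suc n) M = bind_pmf (((\<lambda>M. bind_pmf M s) ^^ n) M) s" by simp
  also have "\<dots> = bind_pmf M (\<lambda>C. bind_pmf (((\<lambda>M. bind_pmf M s) ^^ n) (return_pmf C)) s)"
    by (subst Suc.IH) (simp add: bind_assoc_pmf)
  also have "\<dots> = bind_pmf M (\<lambda>C. ((\<lambda>M. bind_pmf M s) ^^ Suc n) (return_pmf C))" by simp
  finally show ?case .
qed

lemma funpow_bind_Suc:
  "((\<lambda>M. bind_pmf M (s :: 'a \<Rightarrow> 'a pmf)) ^^ Suc n) (return_pmf C) = bind_pmf (s C) (\<lambda>C'. ((\<lambda>M. bind_pmf M s) ^^ n) (return_pmf C'))"
proof -
  have "((\<lambda>M. bind_pmf M s) ^^ Suc n) (return_pmf C) = ((\<lambda>M. bind_pmf M s) ^^ n) (bind_pmf (return_pmf C) s)"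
    by (simp add: funpow_Suc_right del: funpow.simps)
  also have "\<dots> = ((\<lambda>M. bind_pmf M s) ^^ n) (s C)" by (simp add: bind_return_pmf)
  finally show ?thesis by (simp only: funpow_bind[where M="s C"])
qed

lemma sqdist_nonneg: "0 \<le> sqdist d x c"
  unfolding sqdist_def by (auto intro: sum_nonneg)

lemma phi_pt_nonneg: "finite C \<Longrightarrow> C \<noteq> {} \<Longrightarrow> 0 \<le> phi_pt d x C"
  unfolding phi_pt_def by (auto simp: Min_ge_iff sqdist_nonneg)

lemma phi_nonneg: "finite C \<Longrightarrow> C \<noteq> {} \<Longrightarrow> 0 \<le> phi d Y C"
  unfolding phi_def by (auto intro!: sum_nonneg phi_pt_nonneg)

lemma phi_pt_le: "finite C \<Longrightarrow> c \<in> C \<Longrightarrow> phi_pt d x C \<le> sqdist d x c"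
  unfolding phi_pt_def by (auto intro: Min_le)

lemma phi_pt_attained: "finite C \<Longrightarrow> C \<noteq> {} \<Longrightarrow> \<exists>c\<in>C. phi_pt d x C = sqdist d x c"
proof -
  assume "finite C" "C \<noteq> {}"
  then have "Min (sqdist d x ` C) \<in> sqdist d x ` C" by (intro Min_in) auto
  then show ?thesis unfolding phi_pt_def by auto
qed

lemma pmf_d2:
  assumes "finite X" "finite C" "C \<noteq> {}" "phi d X C \<noteq> 0"
  shows "pmf (d2_pmf d X C) x = (if x \<in> X then phi_pt d x C / phi d X C else 0)"
proof -
  let ?f = "\<lambda>x. if x \<in> X then phi_pt d x C / phi d X C else 0"
  have pos: "0 < phi d X C" using phi_nonneg[OF assms(2,3), of d X] assms(4) by linarith
  have nn: "\<And>x. 0 \<le> ?f x" using pos phi_pt_nonneg[OF assms(2,3)] by auto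
  have "(\<integral>\<^sup>+x. ennreal (?f x) \<partial>count_space UNIV) = (\<Sum>x\<in>X. ennreal (?f x))"
    by (rule nn_integral_count_space') (use assms(1) in auto)
  also have "\<dots> = ennreal (\<Sum>x\<in>X. ?f x)" by (rule sum_ennreal) (rule nn)
  also have "(\<Sum>x\<in>X. ?f x) = (\<Sum>x\<in>X. phi_pt d x C) / phi d X C"
    by (simp add: sum_divide_distrib)
  also have "\<dots> = 1" using pos unfolding phi_def by simp
  finally have prob: "(\<integral>\<^sup>+x. ennreal (?f x) \<partial>count_space UNIV) = 1" by simp
  show ?thesis
    unfolding d2_pmf_def using assms(4) pmf_embed_pmf[OF nn prob] by simp
qed

lemma set_d2:
  assumes "finite X" "X \<noteq> {}" "finite C" "C \<noteq> {}"
  shows "set_pmf (d2_pmf d X C) \<subseteq> X"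
proof (cases "phi d X C = 0")
  case True
  then show ?thesis using assms by (simp add: d2_pmf_def)
next
  case False
  show ?thesis
  proof
    fix x assume "x \<in> set_pmf (d2_pmf d X C)"
    then have "pmf (d2_pmf d X C) x \<noteq> 0" by (simp add: set_pmf_eq)
    then show "x \<in> X" using pmf_d2[OF assms(1,3,4) False] by (auto split: if_splits)
  qed
qed

lemma prob_d2:
  assumes "finite X" "finite C" "C \<noteq> {}" "phi d X C \<noteq> 0" "finite A" "A \<subseteq> X"
  shows "measure_pmf.prob (d2_pmf d X C) A = (\<Sum>x\<in>A. phi_pt d x C) / phi d X C"
proof -
  have "measure_pmf.prob (d2_pmf d X C) A = (\<Sum>x\<in>A. pmf (d2_pmf d X C) x)"
    using assms(5) by (rule measure_measure_pmf_finite)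
  also have "\<dots> = (\<Sum>x\<in>A. phi_pt d x C / phi d X C)"
    by (rule sum.cong[OF refl]) (use assms in \<open>auto simp: pmf_d2\<close>)
  finally show ?thesis by (simp add: sum_divide_distrib)
qed



definition Pt :: "real \<Rightarrow> nat \<Rightarrow> point" where
  "Pt D j = (\<lambda>i. if i = j then D else 0)"
definition Qt :: "real \<Rightarrow> nat \<Rightarrow> nat \<Rightarrow> nat \<Rightarrow> point" where
  "Qt D k N m = (\<lambda>i. if i = 0 then D else if i = k then real N else if i = k + 1 + m then 1 else 0)"
definition Cs :: "real \<Rightarrow> nat \<Rightarrow> nat \<Rightarrow> point" where
  "Cs D k N = (\<lambda>i. if i = 0 then D else if i = k then real N else 0)"

lemma sqdist_supp:
  assumes "finite S" "S \<subseteq> {..<d}" "\<And>i. i < d \<Longrightarrow> i \<notin> S \<Longrightarrow> x i = y i"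
  shows "sqdist d x y = (\<Sum>i\<in>S. (x i - y i)^2)"
  unfolding sqdist_def
  by (rule sum.mono_neutral_right) (use assms in auto)

lemma sqdist_sym: "sqdist d x y = sqdist d y x"
  unfolding sqdist_def by (simp add: power2_commute)

lemma sqdist_self: "sqdist d x x = 0"
  unfolding sqdist_def by simp

lemma sq_PP: "i < d \<Longrightarrow> j < d \<Longrightarrow> i \<noteq> j \<Longrightarrow> sqdist d (Pt D i) (Pt D j) = 2 * D^2"
  by (subst sqdist_supp[where S="{i,j}"]) (auto simp: Pt_def)

lemma sq_QP0: "0 < k \<Longrightarrow> k + 1 + m < d \<Longrightarrow> sqdist d (Qt D k N m) (Pt D 0) = real N ^ 2 + 1"
  by (subst sqdist_supp[where S="{k, k+1+m}"]) (auto simp: Pt_def Qt_def)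

lemma sq_QP: "0 < j \<Longrightarrow> j < k \<Longrightarrow> k + 1 + m < d \<Longrightarrow>
    sqdist d (Qt D k N m) (Pt D j) = 2 * D^2 + real N ^ 2 + 1"
  by (subst sqdist_supp[where S="{0, j, k, k+1+m}"]) (auto simp: Pt_def Qt_def)

lemma sq_QQ: "m \<noteq> m' \<Longrightarrow> k + 1 + m < d \<Longrightarrow> k + 1 + m' < d \<Longrightarrow>
    sqdist d (Qt D k N m) (Qt D k N m') = 2"
  by (subst sqdist_supp[where S="{k+1+m, k+1+m'}"]) (auto simp: Qt_def)

lemma sq_QC: "0 < k \<Longrightarrow> k + 1 + m < d \<Longrightarrow> sqdist d (Qt D k N m) (Cs D k N) = 1"
  by (subst sqdist_supp[where S="{k+1+m}"]) (auto simp: Cs_def Qt_def)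

lemma sq_PC: "0 < k \<Longrightarrow> k < d \<Longrightarrow> sqdist d (Pt D 0) (Cs D k N) = real N ^ 2"
  by (subst sqdist_supp[where S="{k}"]) (auto simp: Cs_def Pt_def)


locale kinst =
  fixes D :: real and k N :: nat
  assumes D1: "1 \<le> D" and kpos: "0 < k" and Npos: "1 \<le> N"
begin

lemma Dpos: "0 < D" using D1 by simp

definition "dd = k + 1 + N"
abbreviation "Pset \<equiv> Pt D ` {..<k}"
abbreviation "Qs \<equiv> Qt D k N ` {..<N}"
abbreviation "XX \<equiv> Pset \<union> Qs"

lemma Pt_inj: "Pt D i = Pt D j \<longleftrightarrow> i = j"
proof
  assume "Pt D i = Pt D j"
  then have "Pt D i i = Pt D j i" by simp
  then show "i = j" using Dpos by (auto simp: Pt_def split: if_splits)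
qed simp

lemma Qt_inj: "Qt D k N m = Qt D k N m' \<longleftrightarrow> m = m'"
proof
  assume "Qt D k N m = Qt D k N m'"
  then have "Qt D k N m (k+1+m) = Qt D k N m' (k+1+m)" by simp
  then show "m = m'" by (auto simp: Qt_def split: if_splits)
qed simp

lemma Pt_ne_Qt: "j < k \<Longrightarrow> Pt D j \<noteq> Qt D k N m"
proof
  assume "j < k" "Pt D j = Qt D k N m"
  then have "Pt D j k = Qt D k N m k" by simp
  then show False using \<open>j < k\<close> kpos Npos by (auto simp: Pt_def Qt_def split: if_splits)
qed

lemma inj_Pt: "inj_on (Pt D) A" by (auto intro: inj_onI simp: Pt_inj)
lemma inj_Qt: "inj_on (Qt D k N) A" by (auto intro: inj_onI simp: Qt_inj)

lemma disj_PQ: "Pset \<inter> Qs = {}" using Pt_ne_Qt by auto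

lemma finite_XX: "finite XX" by simp

lemma card_XX: "card XX = k + N"
  using disj_PQ by (simp add: card_Un_disjoint card_image inj_Pt inj_Qt)

lemma XX_sub_Rd: "XX \<subseteq> Rd dd"
  by (auto simp: Rd_def Pt_def Qt_def dd_def)

lemma sq_PP': "i < k \<Longrightarrow> j < k \<Longrightarrow> sqdist dd (Pt D i) (Pt D j) = (if i = j then 0 else 2 * D^2)"
  by (auto simp: sq_PP sqdist_self dd_def)

lemma sq_QP': "j < k \<Longrightarrow> m < N \<Longrightarrow>
   sqdist dd (Qt D k N m) (Pt D j) = (if j = 0 then real N ^ 2 + 1 else 2 * D^2 + real N ^ 2 + 1)"
  using kpos by (auto simp: sq_QP0 sq_QP dd_def)

lemma phi_pt_P:
  assumes "J \<subseteq> {..<k}" "J \<noteq> {}" "i < k"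
  shows "phi_pt dd (Pt D i) (Pt D ` J) = (if i \<in> J then 0 else 2 * D^2)"
proof -
  have fJ: "finite J" using assms(1) finite_subset by blast
  have img: "sqdist dd (Pt D i) ` Pt D ` J = (\<lambda>j. if i = j then 0 else 2 * D^2) ` J"
    using assms by (auto simp: image_image sq_PP' subset_iff intro!: image_cong)
  show ?thesis
    unfolding phi_pt_def img
    by (rule Min_eqI) (use fJ assms(2) Dpos in auto)
qed

lemma phi_pt_Q:
  assumes "J \<subseteq> {..<k}" "J \<noteq> {}" "m < N"
  shows "phi_pt dd (Qt D k N m) (Pt D ` J) = (if 0 \<in> J then real N ^ 2 + 1 else 2 * D^2 + real N ^ 2 + 1)"
proof -
  have fJ: "finite J" using assms(1) finite_subset by blast
  have img: "sqdist dd (Qt D k N m) ` Pt D ` J = (\<lambda>j. if j = 0 then real N ^ 2 + 1 else 2 * D^2 + real N ^ 2 + 1) ` J"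
    using assms by (auto simp: image_image sq_QP' subset_iff intro!: image_cong)
  show ?thesis
    unfolding phi_pt_def img
    by (rule Min_eqI) (use fJ assms(2) Dpos in \<open>auto simp: add_nonneg_nonneg image_iff intro: gr0I\<close>)
qed

lemma sum_XX: "(\<Sum>x\<in>XX. f x) = (\<Sum>i<k. f (Pt D i)) + (\<Sum>m<N. f (Qt D k N m))"
  using disj_PQ by (simp add: sum.union_disjoint sum.reindex inj_Pt inj_Qt)

lemma phi_PJ:
  assumes "J \<subseteq> {..<k}" "J \<noteq> {}"
  shows "phi dd XX (Pt D ` J) = real (k - card J) * (2 * D^2) +
      real N * (if 0 \<in> J then real N ^ 2 + 1 else 2 * D^2 + real N ^ 2 + 1)"
proof -
  have "phi dd XX (Pt D ` J) = (\<Sum>i<k. (if i \<in> J then 0 else 2 * D^2)) +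
      (\<Sum>m<N. (if 0 \<in> J then real N ^ 2 + 1 else 2 * D^2 + real N ^ 2 + 1))"
    unfolding phi_def sum_XX using assms by (simp add: phi_pt_P phi_pt_Q)
  also have "(\<Sum>i<k. (if i \<in> J then 0 else 2 * D^2)) = (\<Sum>i\<in>{..<k} - J. 2 * D^2)"
    by (rule sum.mono_neutral_cong_right) auto
  also have "\<dots> = real (k - card J) * (2 * D^2)"
    using assms(1) by (simp add: card_Diff_subset finite_subset of_nat_diff card_mono)
  finally show ?thesis by simp
qed

end



context kinst begin

definition rl :: "point list \<Rightarrow> point" where
  "rl xs = (if Pt D 0 \<in> set xs then Pt D 0
            else if (\<exists>x\<in>set xs. x \<notin> Qs) then (SOME x. x \<in> set xs \<and> x \<notin> Qs) else hd xs)"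

definition RR :: rule where "RR = (\<lambda>X C k l xs. return_pmf (rl xs))"

lemma rl_in: "xs \<noteq> [] \<Longrightarrow> rl xs \<in> set xs"
proof -
  assume ne: "xs \<noteq> []"
  show ?thesis
  proof (cases "Pt D 0 \<in> set xs")
    case True then show ?thesis by (simp add: rl_def)
  next
    case F: False
    show ?thesis
    proof (cases "\<exists>x\<in>set xs. x \<notin> Qs")
      case True
      then have ex: "\<exists>x. x \<in> set xs \<and> x \<notin> Qs" by blast
      have "rl xs = (SOME x. x \<in> set xs \<and> x \<notin> Qs)" using F True by (simp add: rl_def)
      then show ?thesis using someI_ex[OF ex] by simp
    next
      case False
      then have "rl xs = hd xs" using F by (simp add: rl_def)
      then show ?thesis using ne by simp
    qed
  qed
qed

lemma valid_RR: "valid_rule RR"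
  unfolding valid_rule_def RR_def by (auto simp: rl_in)

lemma rl_P:
  assumes "set xs \<subseteq> XX" "\<not> set xs \<subseteq> Qs"
  shows "rl xs \<in> Pset \<and> rl xs \<in> set xs \<and> (rl xs = Pt D 0 \<longleftrightarrow> Pt D 0 \<in> set xs)"
proof (cases "Pt D 0 \<in> set xs")
  case True
  then show ?thesis using kpos by (simp add: rl_def)
next
  case False
  have ex: "\<exists>x. x \<in> set xs \<and> x \<notin> Qs" using assms(2) by auto
  have "rl xs = (SOME x. x \<in> set xs \<and> x \<notin> Qs)" using False assms(2) by (auto simp: rl_def)
  moreover have "(SOME x. x \<in> set xs \<and> x \<notin> Qs) \<in> set xs \<and> (SOME x. x \<in> set xs \<and> x \<notin> Qs) \<notin> Qs"
    using someI_ex[OF ex] by blast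
  ultimately show ?thesis using False assms(1) by auto
qed

abbreviation "Fs l \<equiv> (\<lambda>M. bind_pmf M (kmpp_step dd RR XX k l))"
definition "G l n C = (Fs l ^^ n) (return_pmf C)"
definition "Bad = {C. \<not> (C \<subseteq> Pset \<and> C \<noteq> {})}"
definition "gam = real N * (real N ^ 2 + 1) / (2 * D^2)"
definition "AA = real N * (2 * D^2 + real N ^ 2 + 1) / (2 * D^2)"
definition "Bnd l n b = (if b then real n * gam else real n * (AA / (AA + real n)) ^ l + real n * gam)"

lemma gam_nonneg: "0 \<le> gam" unfolding gam_def by simp
lemma AA_pos: "0 < AA" unfolding AA_def using Npos Dpos by (simp add: add_pos_nonneg)

lemma Bnd_nonneg: "0 \<le> Bnd l n b"
  unfolding Bnd_def using gam_nonneg AA_pos by auto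

lemma Bnd_mono: "Bnd l n True \<le> Bnd l n False"
  unfolding Bnd_def using AA_pos by simp

lemma G_Suc: "G l (Suc n) C =
   bind_pmf (replicate_pmf l (d2_pmf dd XX C)) (\<lambda>xs. G l n (insert (rl xs) C))"
  unfolding G_def funpow_bind_Suc kmpp_step_def RR_def
  by (simp add: bind_assoc_pmf bind_return_pmf)

lemma phi_PJ_pos: "J \<subseteq> {..<k} \<Longrightarrow> J \<noteq> {} \<Longrightarrow> 0 < phi dd XX (Pt D ` J)"
proof -
  assume a: "J \<subseteq> {..<k}" "J \<noteq> {}"
  have p: "0 < real N * (if 0 \<in> J then real N ^ 2 + 1 else 2 * D^2 + real N ^ 2 + 1)"
    using Npos Dpos by (auto intro!: mult_pos_pos add_pos_nonneg)
  have z: "0 \<le> real (k - card J) * (2 * D^2)" by simp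
  show ?thesis unfolding phi_PJ[OF a] using add_nonneg_pos[OF z p] .
qed

lemma phi_PJ_ne0: "J \<subseteq> {..<k} \<Longrightarrow> J \<noteq> {} \<Longrightarrow> phi dd XX (Pt D ` J) \<noteq> 0"
  using phi_PJ_pos[of J] by linarith

lemma supp_d2:
  assumes "J \<subseteq> {..<k}" "J \<noteq> {}" "x \<in> set_pmf (d2_pmf dd XX (Pt D ` J))"
  shows "x \<in> Qs \<or> (\<exists>i<k. i \<notin> J \<and> x = Pt D i)"
proof -
  have fJ: "finite J" using assms(1) finite_subset by blast
  have "pmf (d2_pmf dd XX (Pt D ` J)) x \<noteq> 0" using assms(3) by (simp add: set_pmf_eq)
  moreover have "pmf (d2_pmf dd XX (Pt D ` J)) x = (if x \<in> XX then phi_pt dd x (Pt D ` J) / phi dd XX (Pt D ` J) else 0)"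
    by (rule pmf_d2) (use fJ assms(2) phi_PJ_ne0[OF assms(1,2)] in auto)
  ultimately have xX: "x \<in> XX" and nz: "phi_pt dd x (Pt D ` J) \<noteq> 0"
    by (auto split: if_splits)
  show ?thesis
  proof (cases "x \<in> Qs")
    case False
    then obtain i where i: "i < k" "x = Pt D i" using xX by auto
    have "i \<notin> J" using nz phi_pt_P[OF assms(1,2) i(1)] i(2) by auto
    then show ?thesis using i by blast
  next
    case True
    then show ?thesis by blast
  qed
qed

end

context kinst begin

lemma prob_Qs:
  assumes "J \<subseteq> {..<k}" "J \<noteq> {}"
  shows "measure_pmf.prob (d2_pmf dd XX (Pt D ` J)) Qs =
     real N * (if 0 \<in> J then real N ^ 2 + 1 else 2 * D^2 + real N ^ 2 + 1) / phi dd XX (Pt D ` J)"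
proof -
  have fJ: "finite J" using assms(1) finite_subset by blast
  have "measure_pmf.prob (d2_pmf dd XX (Pt D ` J)) Qs = (\<Sum>x\<in>Qs. phi_pt dd x (Pt D ` J)) / phi dd XX (Pt D ` J)"
    by (rule prob_d2) (use fJ assms phi_PJ_ne0[OF assms] in auto)
  also have "(\<Sum>x\<in>Qs. phi_pt dd x (Pt D ` J)) = (\<Sum>m<N. phi_pt dd (Qt D k N m) (Pt D ` J))"
    by (simp add: sum.reindex inj_Qt)
  also have "\<dots> = (\<Sum>m<N. (if 0 \<in> J then real N ^ 2 + 1 else 2 * D^2 + real N ^ 2 + 1))"
    by (rule sum.cong[OF refl]) (simp add: phi_pt_Q[OF assms])
  finally show ?thesis by simp
qed

lemma prob_notP0:
  assumes "J \<subseteq> {..<k}" "J \<noteq> {}"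
  shows "measure_pmf.prob (d2_pmf dd XX (Pt D ` J)) (- {Pt D 0}) =
     1 - (if 0 \<in> J then 0 else 2 * D^2) / phi dd XX (Pt D ` J)"
proof -
  have fJ: "finite J" using assms(1) finite_subset by blast
  have "measure_pmf.prob (d2_pmf dd XX (Pt D ` J)) (- {Pt D 0}) =
        1 - measure_pmf.prob (d2_pmf dd XX (Pt D ` J)) {Pt D 0}"
    using measure_pmf.prob_compl[of "{Pt D 0}" "d2_pmf dd XX (Pt D ` J)"] by (simp add: Compl_eq_Diff_UNIV)
  also have "measure_pmf.prob (d2_pmf dd XX (Pt D ` J)) {Pt D 0} = pmf (d2_pmf dd XX (Pt D ` J)) (Pt D 0)"
    by (simp add: measure_pmf_single)
  also have "\<dots> = phi_pt dd (Pt D 0) (Pt D ` J) / phi dd XX (Pt D ` J)"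
    using pmf_d2[of XX "Pt D ` J" dd "Pt D 0"] fJ assms phi_PJ_ne0[OF assms] kpos by auto
  also have "phi_pt dd (Pt D 0) (Pt D ` J) = (if 0 \<in> J then 0 else 2 * D^2)"
    using phi_pt_P[OF assms, of 0] kpos by simp
  finally show ?thesis .
qed

end

context kinst begin

lemma G_zero: "G l 0 C = return_pmf C" by (simp add: G_def)

lemma expect_bound:
  fixes p :: "'a pmf" and h :: "'a \<Rightarrow> real"
  assumes "\<And>x. x \<in> set_pmf p \<Longrightarrow> h x \<le> indicator E1 x + b1 * indicator (- E3) x + b2 * indicator E3 x"
      and "\<And>x. 0 \<le> h x" and "\<And>x. h x \<le> 1" and "0 \<le> b1" "0 \<le> b2"
  shows "measure_pmf.expectation p h \<le>
     measure_pmf.prob p E1 + b1 * (1 - measure_pmf.prob p E3) + b2 * measure_pmf.prob p E3"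
proof -
  let ?g = "\<lambda>x. indicator E1 x + b1 * indicator (- E3) x + b2 * indicator E3 x :: real"
  have ih: "integrable (measure_pmf p) h"
    by (rule measure_pmf.integrable_const_bound[where B=1]) (use assms(2,3) in auto)
  have i1: "integrable (measure_pmf p) (indicator E1 :: 'a \<Rightarrow> real)"
    by (rule measure_pmf.integrable_const_bound[where B=1]) (auto simp: indicator_def)
  have i2: "integrable (measure_pmf p) (indicator (- E3) :: 'a \<Rightarrow> real)"
    by (rule measure_pmf.integrable_const_bound[where B=1]) (auto simp: indicator_def)
  have i3: "integrable (measure_pmf p) (indicator E3 :: 'a \<Rightarrow> real)"
    by (rule measure_pmf.integrable_const_bound[where B=1]) (auto simp: indicator_def)
  have "measure_pmf.expectation p h \<le> measure_pmf.expectation p ?g"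
    by (rule integral_mono_AE[OF ih]) (use i1 i2 i3 assms(1) in \<open>auto intro!: AE_pmfI\<close>)
  also have "measure_pmf.expectation p ?g =
      measure_pmf.expectation p (indicator E1) + b1 * measure_pmf.expectation p (indicator (- E3))
       + b2 * measure_pmf.expectation p (indicator E3)"
    using i1 i2 i3 by simp
  also have "\<dots> = measure_pmf.prob p E1 + b1 * measure_pmf.prob p (- E3) + b2 * measure_pmf.prob p E3"
    by simp
  also have "measure_pmf.prob p (- E3) = 1 - measure_pmf.prob p E3"
    using measure_pmf.prob_compl[of E3 p] by (simp add: Compl_eq_Diff_UNIV)
  finally show ?thesis .
qed

end

context kinst begin

lemma pow_le_self: "0 \<le> (x::real) \<Longrightarrow> x \<le> 1 \<Longrightarrow> 1 \<le> l \<Longrightarrow> x ^ l \<le> x"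
  by (metis One_nat_def le_numeral_extra(4) power_decreasing power_one_right)

lemma frac1: "0 < (c::real) \<Longrightarrow> 0 < a + b*c \<Longrightarrow> (a/c)/(a/c + b) = a/(a + b*c)"
  by (simp add: field_simps)

lemma frac2: "0 < (c::real) \<Longrightarrow> 0 < a + (b+1)*c \<Longrightarrow> (a/c + b)/(a/c + (b+1)) = 1 - c/(a + (b+1)*c)"
proof -
  assume c: "0 < c" and p: "0 < a + (b+1)*c"
  have e1: "a/c + b = (a + b*c)/c" using c by (simp add: field_simps)
  have e2: "a/c + (b+1) = (a + (b+1)*c)/c" using c by (simp add: field_simps)
  have "(a/c + b)/(a/c + (b+1)) = (a + b*c)/(a + (b+1)*c)"
    unfolding e1 e2 using c p by simp
  also have "\<dots> = 1 - c/(a + (b+1)*c)"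
    using p by (simp add: field_simps)
  finally show ?thesis .
qed

lemma main_ind:
  assumes l: "1 \<le> l"
  shows "J \<subseteq> {..<k} \<Longrightarrow> J \<noteq> {} \<Longrightarrow> card J + n = k \<Longrightarrow>
    measure_pmf.prob (G l n (Pt D ` J)) Bad \<le> Bnd l n (0 \<in> J)"
proof (induction n arbitrary: J)
  case 0
  then have "Pt D ` J \<subseteq> Pset" "Pt D ` J \<noteq> {}" by auto
  then show ?case by (simp add: G_zero Bad_def Bnd_def)
next
  case (Suc n)
  note J = Suc.prems(1,2)
  have fJ: "finite J" using J(1) finite_subset by blast
  define C where "C = Pt D ` J"
  define p where "p = d2_pmf dd XX C"
  define h where "h = (\<lambda>xs. measure_pmf.prob (G l n (insert (rl xs) C)) Bad)"
  define E1 where "E1 = {xs :: point list. set xs \<subseteq> Qs}"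
  define E3 where "E3 = {xs :: point list. set xs \<subseteq> - {Pt D 0}}"
  define b1 where "b1 = Bnd l n True"
  define b2 where "b2 = Bnd l n (0 \<in> J)"
  have P0Q: "Pt D 0 \<notin> Qs" using Pt_ne_Qt kpos by blast
  have bound: "h xs \<le> indicator E1 xs + b1 * indicator (- E3) xs + b2 * indicator E3 xs"
    if xs: "xs \<in> set_pmf (replicate_pmf l p)" for xs
  proof -
    have len: "length xs = l" and sx: "set xs \<subseteq> set_pmf p"
      using xs by (auto simp: set_replicate_pmf)
    have ne: "xs \<noteq> []" using len l by auto
    have supp: "\<And>x. x \<in> set xs \<Longrightarrow> x \<in> Qs \<or> (\<exists>i<k. i \<notin> J \<and> x = Pt D i)"
      using supp_d2[OF J] sx unfolding p_def C_def by blast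
    have sXX: "set xs \<subseteq> XX" using supp by blast
    have b1nn: "0 \<le> b1" and b2nn: "0 \<le> b2" unfolding b1_def b2_def by (rule Bnd_nonneg)+
    show ?thesis
    proof (cases "set xs \<subseteq> Qs")
      case True
      have "h xs \<le> 1" unfolding h_def by simp
      then show ?thesis using True b1nn b2nn by (simp add: E1_def indicator_def)
    next
      case nQ: False
      show ?thesis
      proof (cases "Pt D 0 \<in> set xs")
        case True
        have r: "rl xs = Pt D 0" using True by (simp add: rl_def)
        have "0 \<notin> J" using supp[OF True] P0Q by (auto simp: Pt_inj)
        let ?J' = "insert 0 J"
        have "insert (rl xs) C = Pt D ` ?J'" using r by (simp add: C_def)
        moreover have "?J' \<subseteq> {..<k}" "?J' \<noteq> {}" "card ?J' + n = k"
          using J kpos \<open>0 \<notin> J\<close> fJ Suc.prems(3) by auto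
        ultimately have "h xs \<le> Bnd l n (0 \<in> ?J')"
          unfolding h_def using Suc.IH by presburger
        then have "h xs \<le> b1" by (simp add: b1_def)
        moreover have "xs \<notin> E3" using True by (auto simp: E3_def)
        moreover have "xs \<notin> E1" using nQ by (simp add: E1_def)
        ultimately show ?thesis by (simp add: indicator_def)
      next
        case False
        have rP: "rl xs \<in> Pset" "rl xs \<in> set xs" "rl xs \<noteq> Pt D 0"
          using rl_P[OF sXX nQ] False by auto
        then obtain i where i: "i < k" "rl xs = Pt D i" by auto
        have "i \<noteq> 0" using i rP(3) by auto
        have "i \<notin> J"
          using supp[OF rP(2)] i Pt_ne_Qt by (auto simp: Pt_inj)
        let ?J' = "insert i J"
        have "insert (rl xs) C = Pt D ` ?J'" using i by (simp add: C_def)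
        moreover have "?J' \<subseteq> {..<k}" "?J' \<noteq> {}" "card ?J' + n = k"
          using J i \<open>i \<notin> J\<close> fJ Suc.prems(3) by auto
        ultimately have "h xs \<le> Bnd l n (0 \<in> ?J')"
          unfolding h_def using Suc.IH by presburger
        then have "h xs \<le> b2" using \<open>i \<noteq> 0\<close> by (simp add: b2_def)
        moreover have "xs \<in> E3" using False by (auto simp: E3_def)
        moreover have "xs \<notin> E1" using nQ by (simp add: E1_def)
        ultimately show ?thesis by (simp add: indicator_def)
      qed
    qed
  qed
  have "measure_pmf.prob (G l (Suc n) (Pt D ` J)) Bad = measure_pmf.expectation (replicate_pmf l p) h"
    unfolding G_Suc prob_bind_pmf h_def p_def C_def ..
  also have "\<dots> \<le> measure_pmf.prob (replicate_pmf l p) E1 + b1 * (1 - measure_pmf.prob (replicate_pmf l p) E3)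
      + b2 * measure_pmf.prob (replicate_pmf l p) E3"
    by (rule expect_bound[OF bound]) (auto simp: h_def b1_def b2_def Bnd_nonneg)
  also have "measure_pmf.prob (replicate_pmf l p) E1 = measure_pmf.prob p Qs ^ l"
    unfolding E1_def by (rule replicate_pmf_all)
  also have "measure_pmf.prob (replicate_pmf l p) E3 = measure_pmf.prob p (- {Pt D 0}) ^ l"
    unfolding E3_def by (rule replicate_pmf_all)
  finally have main: "measure_pmf.prob (G l (Suc n) (Pt D ` J)) Bad \<le>
      measure_pmf.prob p Qs ^ l + b1 * (1 - measure_pmf.prob p (- {Pt D 0}) ^ l)
      + b2 * measure_pmf.prob p (- {Pt D 0}) ^ l" .
  define T where "T = phi dd XX C"
  have u: "k - card J = Suc n" using Suc.prems(3) by simp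
  have Dsq: "0 < D^2" using Dpos by simp
  show ?case
  proof (cases "0 \<in> J")
    case True
    have T: "T = real (Suc n) * (2 * D^2) + real N * (real N ^ 2 + 1)"
      unfolding T_def C_def using phi_PJ[OF J] True u by simp
    have pq: "measure_pmf.prob p Qs = real N * (real N ^ 2 + 1) / T"
      unfolding p_def C_def T_def using prob_Qs[OF J] True by simp
    have q_le: "real N * (real N ^ 2 + 1) / T \<le> gam"
    proof -
      have a: "0 \<le> real n * (2*D^2)" and b: "0 \<le> real N * (real N^2 + 1)" by simp_all
      have "T = 2*D^2 + (real n * (2*D^2) + real N * (real N^2 + 1))" by (simp add: T algebra_simps)
      then have t1: "2 * D^2 \<le> T" using a b by linarith
      have "0 < 2 * D^2" using Dsq by simp
      then have t2: "0 < T" using t1 by (rule less_le_trans)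
      show ?thesis unfolding gam_def
        by (intro divide_left_mono t1) (use Dsq t2 in \<open>auto intro!: mult_pos_pos\<close>)
    qed
    have q_le1: "real N * (real N ^ 2 + 1) / T \<le> 1"
      unfolding T using Dsq by (simp add: divide_le_eq_1 add_pos_nonneg)
    have "measure_pmf.prob p Qs ^ l \<le> gam"
      unfolding pq using pow_le_self[OF _ q_le1 l] q_le unfolding T by (simp add: add_pos_nonneg) 
    then show ?thesis using main True by (simp add: b1_def b2_def Bnd_def algebra_simps)
  next
    case False
    define w where "w = 2 * D^2 + real N ^ 2 + 1"
    have T: "T = real (Suc n) * (2 * D^2) + real N * w"
      unfolding T_def C_def w_def using phi_PJ[OF J] False u by simp
    have Tpos: "0 < T" unfolding T w_def using Dsq Npos by (simp add: add_pos_nonneg)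
    have AAw: "AA = real N * w / (2 * D^2)" unfolding AA_def w_def ..
    have Tpos': "0 < real N * w + real (Suc n) * (2 * D^2)" using Tpos unfolding T by simp
    have pq0: "measure_pmf.prob p Qs = real N * w / T"
      unfolding p_def C_def T_def using prob_Qs[OF J] False by (simp add: w_def)
    have pq: "measure_pmf.prob p Qs = AA / (AA + real (Suc n))"
      unfolding pq0 AAw frac1[OF _ Tpos'] using Dsq by (simp add: T algebra_simps)
    have pn0: "measure_pmf.prob p (- {Pt D 0}) = 1 - 2 * D^2 / T"
      unfolding p_def C_def T_def using prob_notP0[OF J] False by simp
    have Tpos'': "0 < real N * w + (real n + 1) * (2 * D^2)" using Tpos' by (simp add: algebra_simps)
    have pn: "measure_pmf.prob p (- {Pt D 0}) = (AA + real n) / (AA + real (Suc n))"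
      unfolding pn0 AAw using frac2[OF _ Tpos''] Dsq by (simp add: T algebra_simps)
    have Ap: "0 < AA" by (rule AA_pos)
    have key: "(AA / (AA + real n)) ^ l * ((AA + real n) / (AA + real (Suc n))) ^ l
        = (AA / (AA + real (Suc n))) ^ l"
    proof -
      have "(AA / (AA + real n)) * ((AA + real n) / (AA + real (Suc n))) = AA / (AA + real (Suc n))"
      proof -
        have n1: "AA + real n \<noteq> 0" and n2: "AA + real (Suc n) \<noteq> 0" using Ap by (simp_all add: add_pos_nonneg)
        show ?thesis using n1 n2 by (simp add: divide_simps)
      qed
      then show ?thesis by (metis power_mult_distrib)
    qed
    have "measure_pmf.prob (G l (Suc n) (Pt D ` J)) Bad \<le>
        (AA / (AA + real (Suc n))) ^ l + real n * gam
        + real n * ((AA / (AA + real n)) ^ l * ((AA + real n) / (AA + real (Suc n))) ^ l)"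
      using main False unfolding pq pn b1_def b2_def Bnd_def by (simp add: algebra_simps)
    also have "\<dots> = real (Suc n) * (AA / (AA + real (Suc n))) ^ l + real n * gam"
      unfolding key by (simp add: algebra_simps)
    also have "\<dots> \<le> Bnd l (Suc n) (0 \<in> J)"
      using False gam_nonneg by (simp add: Bnd_def distrib_right)
    finally show ?thesis .
  qed
qed

end

context kinst begin

lemma kmpp_eq: "kmpp dd RR XX k l = bind_pmf (replicate_pmf l (pmf_of_set XX)) (\<lambda>xs. G l (k - 1) {rl xs})"
  unfolding kmpp_def RR_def G_def by (simp add: bind_return_pmf)

lemma card_Qs: "card Qs = N" by (simp add: card_image inj_Qt)

lemma first_bound:
  assumes l: "1 \<le> l" and k2: "2 \<le> k"
  shows "measure_pmf.prob (kmpp dd RR XX k l) Bad \<le> (real N / (real N + real k)) ^ l + Bnd l (k - 1) False"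
proof -
  define p where "p = pmf_of_set XX"
  define h where "h = (\<lambda>xs. measure_pmf.prob (G l (k - 1) {rl xs}) Bad)"
  define E1 where "E1 = {xs :: point list. set xs \<subseteq> Qs}"
  define b where "b = Bnd l (k - 1) False"
  have XXne: "XX \<noteq> {}" using kpos by auto
  have bnn: "0 \<le> b" unfolding b_def by (rule Bnd_nonneg)
  have bound: "h xs \<le> indicator E1 xs + b * indicator (- UNIV) xs + b * indicator UNIV xs"
    if xs: "xs \<in> set_pmf (replicate_pmf l p)" for xs
  proof -
    have len: "length xs = l" and sx: "set xs \<subseteq> XX"
      using xs XXne by (auto simp: set_replicate_pmf p_def)
    show ?thesis
    proof (cases "set xs \<subseteq> Qs")
      case True
      have "h xs \<le> 1" unfolding h_def by simp
      then show ?thesis using True bnn by (simp add: E1_def indicator_def)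
    next
      case False
      have "rl xs \<in> Pset" using rl_P[OF sx False] by blast
      then obtain j where j: "j < k" "rl xs = Pt D j" by auto
      have "h xs \<le> Bnd l (k - 1) (0 \<in> {j})"
        unfolding h_def using main_ind[OF l, of "{j}" "k - 1"] j k2 by simp
      also have "\<dots> \<le> b" unfolding b_def using Bnd_mono by (cases "j = 0") auto
      finally show ?thesis using False by (simp add: E1_def indicator_def)
    qed
  qed
  have "measure_pmf.prob (kmpp dd RR XX k l) Bad = measure_pmf.expectation (replicate_pmf l p) h"
    unfolding kmpp_eq prob_bind_pmf h_def p_def ..
  also have "\<dots> \<le> measure_pmf.prob (replicate_pmf l p) E1 + b * (1 - measure_pmf.prob (replicate_pmf l p) UNIV)
      + b * measure_pmf.prob (replicate_pmf l p) UNIV"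
    by (rule expect_bound[OF bound]) (auto simp: h_def bnn)
  also have "measure_pmf.prob (replicate_pmf l p) E1 = measure_pmf.prob p Qs ^ l"
    unfolding E1_def by (rule replicate_pmf_all)
  also have "measure_pmf.prob p Qs = real N / (real N + real k)"
    unfolding p_def using XXne card_XX card_Qs by (simp add: measure_pmf_of_set Int_absorb1 add.commute)
  finally show ?thesis by (simp add: b_def)
qed

lemma phi_good:
  assumes "C \<subseteq> Pset" "C \<noteq> {}"
  shows "real N * (real N ^ 2 + 1) \<le> phi dd XX C"
proof -
  have fC: "finite C" using assms(1) finite_subset by blast
  have q: "real N ^ 2 + 1 \<le> phi_pt dd (Qt D k N m) C" if m: "m < N" for m
  proof -
    obtain c where c: "c \<in> C" "phi_pt dd (Qt D k N m) C = sqdist dd (Qt D k N m) c"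
      using phi_pt_attained[OF fC assms(2)] by blast
    then obtain j where j: "j < k" "c = Pt D j" using assms(1) by auto
    show ?thesis using c j m sq_QP'[OF j(1) m] Dpos by auto
  qed
  have "phi dd XX C = (\<Sum>i<k. phi_pt dd (Pt D i) C) + (\<Sum>m<N. phi_pt dd (Qt D k N m) C)"
    unfolding phi_def by (rule sum_XX)
  moreover have "0 \<le> (\<Sum>i<k. phi_pt dd (Pt D i) C)"
    by (intro sum_nonneg phi_pt_nonneg[OF fC assms(2)])
  moreover have "(\<Sum>m<N. real N ^ 2 + 1) \<le> (\<Sum>m<N. phi_pt dd (Qt D k N m) C)"
    by (intro sum_mono q) simp
  ultimately show ?thesis by simp
qed

end


lemma mid_ineq: "sqdist d x y / 2 \<le> sqdist d x c + sqdist d y c"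
proof -
  have pt: "(x i - y i)^2 / 2 \<le> (x i - c i)^2 + (y i - c i)^2" for i
  proof -
    have "2 * ((x i - c i)^2 + (y i - c i)^2) - (x i - y i)^2 = (x i + y i - 2 * c i)^2"
      by (simp add: power2_eq_square algebra_simps)
    moreover have "0 \<le> (x i + y i - 2 * c i)^2" by simp
    ultimately have "(x i - y i)^2 \<le> 2 * ((x i - c i)^2 + (y i - c i)^2)" by linarith
    then show ?thesis by (simp add: field_simps)
  qed
  have "sqdist d x y / 2 = (\<Sum>i<d. (x i - y i)^2 / 2)"
    unfolding sqdist_def by (simp add: sum_divide_distrib)
  also have "\<dots> \<le> (\<Sum>i<d. (x i - c i)^2 + (y i - c i)^2)"
    by (intro sum_mono pt)
  also have "\<dots> = sqdist d x c + sqdist d y c"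
    unfolding sqdist_def by (simp add: sum.distrib)
  finally show ?thesis .
qed

context kinst begin

lemma dist_ge1:
  assumes "x \<in> XX" "y \<in> XX" "x \<noteq> y"
  shows "1 \<le> sqdist dd x y"
proof -
  have D2: "1 \<le> D^2" using D1 by (simp add: one_le_power)
  have PQ: "1 \<le> sqdist dd (Qt D k N m) (Pt D j)" if "m < N" "j < k" for m j
    using sq_QP'[OF that(2,1)] D2 by (simp add: add_nonneg_nonneg)
  show ?thesis
  proof (cases "x \<in> Pset")
    case xP: True
    then obtain i where i: "i < k" "x = Pt D i" by auto
    show ?thesis
    proof (cases "y \<in> Pset")
      case True
      then obtain j where j: "j < k" "y = Pt D j" by auto
      then have "i \<noteq> j" using i assms(3) by auto
      then show ?thesis using i j sq_PP' D2 by simp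
    next
      case False
      then obtain m where m: "m < N" "y = Qt D k N m" using assms(2) by auto
      then show ?thesis using PQ[OF m(1) i(1)] i by (simp add: sqdist_sym)
    qed
  next
    case False
    then obtain m where m: "m < N" "x = Qt D k N m" using assms(1) by auto
    show ?thesis
    proof (cases "y \<in> Pset")
      case True
      then obtain j where j: "j < k" "y = Pt D j" by auto
      then show ?thesis using PQ[OF m(1) j(1)] m by simp
    next
      case False
      then obtain m' where m': "m' < N" "y = Qt D k N m'" using assms(2) by auto
      then have "m \<noteq> m'" using m assms(3) by auto
      then show ?thesis using m m' sq_QQ[of m m' k dd D N] by (simp add: dd_def)
    qed
  qed
qed

definition "CC = insert (Cs D k N) (Pt D ` {1..<k})"

lemma CC_props: "finite CC" "card CC = k" "CC \<subseteq> Rd dd"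
proof -
  have nin: "Cs D k N \<notin> Pt D ` {1..<k}"
  proof
    assume "Cs D k N \<in> Pt D ` {1..<k}"
    then obtain j where j: "j < k" "Cs D k N = Pt D j" by auto
    then have "Cs D k N k = Pt D j k" by simp
    then show False using j Npos kpos by (simp add: Cs_def Pt_def)
  qed
  show "finite CC" by (simp add: CC_def)
  show "card CC = k" using nin kpos by (simp add: CC_def card_image inj_Pt)
  show "CC \<subseteq> Rd dd" by (auto simp: CC_def Rd_def Cs_def Pt_def dd_def)
qed

lemma phi_CC: "phi dd XX CC \<le> real N ^ 2 + real N"
proof -
  have fCC: "finite CC" and neCC: "CC \<noteq> {}" by (auto simp: CC_def)
  have p: "phi_pt dd (Pt D i) CC \<le> (if i = 0 then real N ^ 2 else 0)" if "i < k" for i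
  proof (cases "i = 0")
    case True
    have "phi_pt dd (Pt D 0) CC \<le> sqdist dd (Pt D 0) (Cs D k N)"
      by (rule phi_pt_le[OF fCC]) (simp add: CC_def)
    then show ?thesis using True sq_PC[of k dd D N] kpos by (simp add: dd_def)
  next
    case False
    have "phi_pt dd (Pt D i) CC \<le> sqdist dd (Pt D i) (Pt D i)"
      by (rule phi_pt_le[OF fCC]) (use False that in \<open>auto simp: CC_def\<close>)
    then show ?thesis using False by (simp add: sqdist_self)
  qed
  have q: "phi_pt dd (Qt D k N m) CC \<le> 1" if "m < N" for m
  proof -
    have "phi_pt dd (Qt D k N m) CC \<le> sqdist dd (Qt D k N m) (Cs D k N)"
      by (rule phi_pt_le[OF fCC]) (simp add: CC_def)
    then show ?thesis using sq_QC[of k m dd D N] kpos that by (simp add: dd_def)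
  qed
  have "phi dd XX CC = (\<Sum>i<k. phi_pt dd (Pt D i) CC) + (\<Sum>m<N. phi_pt dd (Qt D k N m) CC)"
    unfolding phi_def by (rule sum_XX)
  also have "\<dots> \<le> (\<Sum>i<k. (if i = 0 then real N ^ 2 else 0)) + (\<Sum>m<N. 1)"
    by (intro add_mono sum_mono p q) auto
  also have "(\<Sum>i<k. (if i = 0 then real N ^ 2 else 0)) = real N ^ 2"
    using kpos by (simp add: sum.delta')
  finally show ?thesis by simp
qed

abbreviation "SS \<equiv> {phi dd XX C | C. C \<subseteq> Rd dd \<and> finite C \<and> card C = k}"

lemma SS_ne: "SS \<noteq> {}" using CC_props by blast

lemma SS_nonneg: "x \<in> SS \<Longrightarrow> 0 \<le> x"
  using kpos by (auto intro!: phi_nonneg)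

lemma OPT_le: "OPT dd k XX \<le> real N ^ 2 + real N"
proof -
  have bdd: "bdd_below SS" by (rule bdd_belowI[where m=0]) (rule SS_nonneg)
  have mem: "phi dd XX CC \<in> SS" using CC_props by blast
  have "OPT dd k XX \<le> phi dd XX CC"
    unfolding OPT_def by (rule cInf_lower[OF mem bdd])
  then show ?thesis using phi_CC by linarith
qed

lemma phi_ge_half:
  assumes "finite C" "card C = k"
  shows "1/2 \<le> phi dd XX C"
proof -
  have Cne: "C \<noteq> {}" using assms kpos by auto
  define Y where "Y = insert (Qt D k N 0) Pset"
  have Q0: "Qt D k N 0 \<notin> Pset"
  proof
    assume "Qt D k N 0 \<in> Pset"
    then obtain j where "j < k" "Qt D k N 0 = Pt D j" by auto
    then show False using Pt_ne_Qt[of j 0] by simp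
  qed
  have cardY: "card Y = k + 1" using Q0 by (simp add: Y_def card_image inj_Pt)
  have YX: "Y \<subseteq> XX" using Npos by (auto simp: Y_def)
  define nc where "nc = (\<lambda>y. SOME c. c \<in> C \<and> phi_pt dd y C = sqdist dd y c)"
  have nc: "nc y \<in> C \<and> phi_pt dd y C = sqdist dd y (nc y)" for y
  proof -
    obtain c0 where c0: "c0 \<in> C \<and> phi_pt dd y C = sqdist dd y c0"
      using phi_pt_attained[OF assms(1) Cne, of dd y] by blast
    show ?thesis unfolding nc_def
      by (rule someI[where P="\<lambda>c. c \<in> C \<and> phi_pt dd y C = sqdist dd y c", OF c0])
  qed
  have "\<not> inj_on nc Y"
  proof
    assume "inj_on nc Y"
    moreover have "nc ` Y \<subseteq> C" using nc by blast
    ultimately have "card Y \<le> card C"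
      using assms(1) by (rule card_inj_on_le)
    then show False using cardY assms(2) by simp
  qed
  then obtain y1 y2 where y: "y1 \<in> Y" "y2 \<in> Y" "y1 \<noteq> y2" "nc y1 = nc y2"
    unfolding inj_on_def by auto
  have "phi_pt dd y1 C + phi_pt dd y2 C = (\<Sum>x\<in>{y1, y2}. phi_pt dd x C)"
    using y(3) by simp
  also have "\<dots> \<le> phi dd XX C"
    unfolding phi_def
  proof (rule sum_mono2)
    show "finite XX" by simp
    show "{y1, y2} \<subseteq> XX" using y(1,2) YX by blast
    show "\<And>b. b \<in> XX - {y1, y2} \<Longrightarrow> 0 \<le> phi_pt dd b C" using phi_pt_nonneg[OF assms(1) Cne] by blast
  qed
  finally have A: "phi_pt dd y1 C + phi_pt dd y2 C \<le> phi dd XX C" .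
  have "sqdist dd y1 y2 / 2 \<le> sqdist dd y1 (nc y1) + sqdist dd y2 (nc y1)"
    by (rule mid_ineq)
  also have "\<dots> = phi_pt dd y1 C + phi_pt dd y2 C" using nc[of y1] nc[of y2] y(4) by metis
  finally have B: "sqdist dd y1 y2 / 2 \<le> phi_pt dd y1 C + phi_pt dd y2 C" .
  have "1 \<le> sqdist dd y1 y2" by (rule dist_ge1) (use y YX in blast)+
  then show ?thesis using A B by linarith
qed

lemma OPT_ge: "1/2 \<le> OPT dd k XX"
  unfolding OPT_def
proof (rule cInf_greatest[OF SS_ne])
  fix x assume "x \<in> SS"
  then obtain C where "x = phi dd XX C" "finite C" "card C = k" by blast
  then show "1/2 \<le> x" using phi_ge_half by simp
qed

end

context kinst begin

lemma supp_G:
  assumes l: "1 \<le> l"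
  shows "finite C \<Longrightarrow> C \<noteq> {} \<Longrightarrow> C \<subseteq> XX \<Longrightarrow> C' \<in> set_pmf (G l n C) \<Longrightarrow>
    C' \<subseteq> XX \<and> C' \<noteq> {} \<and> finite C' \<and> card C' \<le> card C + n"
proof (induction n arbitrary: C)
  case 0
  then show ?case by (simp add: G_zero)
next
  case (Suc n)
  from Suc.prems(4) obtain xs where xs: "xs \<in> set_pmf (replicate_pmf l (d2_pmf dd XX C))"
    and C': "C' \<in> set_pmf (G l n (insert (rl xs) C))"
    unfolding G_Suc by auto
  have len: "length xs = l" and sx: "set xs \<subseteq> set_pmf (d2_pmf dd XX C)"
    using xs by (auto simp: set_replicate_pmf)
  have "set_pmf (d2_pmf dd XX C) \<subseteq> XX"
    by (rule set_d2) (use Suc.prems kpos in auto)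
  moreover have "rl xs \<in> set xs" using len l by (intro rl_in) auto
  ultimately have rX: "rl xs \<in> XX" using sx by blast
  have IH: "C' \<subseteq> XX \<and> C' \<noteq> {} \<and> finite C' \<and> card C' \<le> card (insert (rl xs) C) + n"
    by (rule Suc.IH) (use Suc.prems rX C' in auto)
  have "card (insert (rl xs) C) \<le> card C + 1" using Suc.prems(1) by (simp add: card_insert_if)
  then show ?case using IH by simp
qed

lemma phi_supp_ge1:
  assumes l: "1 \<le> l" and k2: "2 \<le> k" and C: "C \<in> set_pmf (kmpp dd RR XX k l)"
  shows "1 \<le> phi dd XX C"
proof -
  have XXne: "XX \<noteq> {}" using kpos by auto
  from C obtain xs where xs: "xs \<in> set_pmf (replicate_pmf l (pmf_of_set XX))"
    and C': "C \<in> set_pmf (G l (k - 1) {rl xs})"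
    unfolding kmpp_eq by auto
  have len: "length xs = l" and sx: "set xs \<subseteq> XX"
    using xs XXne by (auto simp: set_replicate_pmf)
  have "rl xs \<in> set xs" using len l by (intro rl_in) auto
  then have rX: "rl xs \<in> XX" using sx by blast
  have P: "C \<subseteq> XX \<and> C \<noteq> {} \<and> finite C \<and> card C \<le> card {rl xs} + (k - 1)"
    by (rule supp_G[OF l]) (use rX C' in auto)
  then have cC: "card C \<le> k" using k2 by simp
  have "\<not> XX \<subseteq> C"
  proof
    assume "XX \<subseteq> C"
    then have "card XX \<le> card C" using P by (intro card_mono) auto
    then show False using cC card_XX Npos by simp
  qed
  then obtain x where x: "x \<in> XX" "x \<notin> C" by blast
  obtain c where c: "c \<in> C" "phi_pt dd x C = sqdist dd x c"
    using phi_pt_attained[of C dd x] P by blast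
  have "1 \<le> sqdist dd x c" by (rule dist_ge1) (use x c P in auto)
  also have "\<dots> = phi_pt dd x C" using c by simp
  also have "\<dots> \<le> phi dd XX C" unfolding phi_def
    by (rule member_le_sum) (use x P phi_pt_nonneg in auto)
  finally show ?thesis .
qed

end

context kinst begin

lemma div_cancel_aux: "(x::real) \<noteq> 0 \<Longrightarrow> x / (a * x) = 1 / a"
  by (cases "a = 0") (simp_all add: field_simps)

lemma numeric:
  assumes k2: "2 \<le> k" and l2: "2 \<le> l" and pw: "(8 * real N) ^ l \<le> real k ^ (l - 1)"
      and Ddef: "D = 4 * real k * (real N + 1) ^ 3"
  shows "(real N / (real N + real k)) ^ l + Bnd l (k - 1) False \<le> 1/2"
proof -
  have kr: "2 \<le> real k" using k2 by simp
  obtain m where lm: "l = Suc m" using l2 by (cases l) auto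
  have Nr: "1 \<le> real N" using Npos by simp
  have DD: "D \<le> D^2" using D1 by (simp add: power2_eq_square)
  have cub: "real N * (real N ^ 2 + 1) \<le> (real N + 1) ^ 3"
    using Nr by (simp add: power3_eq_cube power2_eq_square algebra_simps)
  have npos: "0 < real N * (real N ^ 2 + 1)" using Nr by (simp add: add_pos_nonneg)
  have "8 * real k * (real N * (real N ^ 2 + 1)) \<le> 8 * real k * (real N + 1) ^ 3"
    using cub kr by simp
  also have "\<dots> = 2 * D" using Ddef by simp
  also have "\<dots> \<le> 2 * D^2" using DD by simp
  finally have big: "8 * real k * (real N * (real N ^ 2 + 1)) \<le> 2 * D^2" .
  have gam_le: "gam \<le> 1 / (8 * real k)"
  proof -
    have "gam = real N * (real N ^ 2 + 1) / (2 * D^2)" by (simp add: gam_def)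
    also have "\<dots> \<le> real N * (real N ^ 2 + 1) / (8 * real k * (real N * (real N ^ 2 + 1)))"
      by (rule divide_left_mono[OF big]) (use npos kr Dpos Nr in \<open>auto intro!: mult_pos_pos add_pos_nonneg\<close>)
    also have "\<dots> = 1 / (8 * real k)" by (rule div_cancel_aux) (use npos in linarith)
    finally show ?thesis .
  qed
  have AAeq: "AA = real N + gam"
    unfolding AA_def gam_def using Dpos by (simp add: field_simps)
  have "1 / (8 * real k) \<le> 1" using kr by simp
  then have g1: "gam \<le> 1" using gam_le by linarith
  have AA2: "AA \<le> 2 * real N" using AAeq g1 Nr by simp
  have AAp: "0 < AA" by (rule AA_pos)
  have km1: "real (k - 1) = real k - 1" using k2 by simp
  have q: "AA / (AA + real (k - 1)) \<le> 4 * real N / real k"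
  proof -
    have a1: "AA * real k \<le> 2 * real N * real k" using AA2 kr by simp
    have "real N * (2 * real k) \<le> real N * (4 * (real k - 1))"
      by (rule mult_left_mono) (use kr in auto)
    moreover have "2 * real N * real k = real N * (2 * real k)" by (simp add: algebra_simps)
    moreover have "4 * real N * (real k - 1) = real N * (4 * (real k - 1))" by (simp add: algebra_simps)
    ultimately have a2: "2 * real N * real k \<le> 4 * real N * (real k - 1)" by linarith
    have a3: "4 * real N * (real k - 1) \<le> 4 * real N * (AA + (real k - 1))" using AAp Nr by simp
    have H: "AA * real k \<le> 4 * real N * (AA + real (k - 1))" unfolding km1 using a1 a2 a3 by linarith
    have pos: "0 < AA + real (k - 1)" using AAp by simp
    have kp0: "0 < real k" using kr by simp
    have "AA \<le> (4 * real N * (AA + real (k - 1))) / real k"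
      using H by (subst pos_le_divide_eq[OF kp0])
    also have "(4 * real N * (AA + real (k - 1))) / real k = (4 * real N / real k) * (AA + real (k - 1))"
      by simp
    finally show ?thesis by (subst pos_divide_le_eq[OF pos])
  qed
  have qp: "(AA / (AA + real (k - 1))) ^ l \<le> (4 * real N / real k) ^ l"
    by (rule power_mono[OF q]) (use AAp in simp)
  also have "(4 * real N / real k) ^ l = (8 * real N) ^ l / (2 ^ l * real k ^ l)"
  proof -
    have e: "4 * real N / real k = (8 * real N) / (2 * real k)" by simp
    have "(4 * real N / real k) ^ l = (8 * real N) ^ l / (2 * real k) ^ l" unfolding e by (rule power_divide)
    also have "(2 * real k) ^ l = 2 ^ l * real k ^ l" by (rule power_mult_distrib)
    finally show ?thesis .
  qed
  also have "\<dots> \<le> real k ^ (l - 1) / (2 ^ l * real k ^ l)"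
    by (rule divide_right_mono[OF pw]) simp
  also have "real k ^ l = real k * real k ^ (l - 1)"
    using lm by simp
  also have "real k ^ (l - 1) / (2 ^ l * (real k * real k ^ (l - 1))) = 1 / (2 ^ l * real k)"
    using kr by simp
  finally have qp2: "(AA / (AA + real (k - 1))) ^ l \<le> 1 / (2 ^ l * real k)" .
  have t2: "real (k - 1) * (AA / (AA + real (k - 1))) ^ l \<le> 1/4"
  proof -
    have "real (k - 1) * (AA / (AA + real (k - 1))) ^ l \<le> real k * (1 / (2 ^ l * real k))"
    proof (rule mult_mono)
      show "0 \<le> (AA / (AA + real (k - 1))) ^ l" using AAp by simp
    qed (use qp2 km1 in auto)
    also have "\<dots> = 1 / 2 ^ l" using kr by simp
    also have "\<dots> \<le> 1 / 2 ^ 2" using l2 by (intro divide_left_mono power_increasing) auto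
    finally show ?thesis by simp
  qed
  have t3: "real (k - 1) * gam \<le> 1/8"
  proof -
    have "real (k - 1) * gam \<le> real k * (1 / (8 * real k))"
      by (rule mult_mono) (use gam_le km1 gam_nonneg in auto)
    also have "\<dots> = 1/8" using kr by simp
    finally show ?thesis .
  qed
  have t1: "(real N / (real N + real k)) ^ l \<le> 1/8"
  proof -
    have "real k ^ (l-1) \<le> real k ^ l" by (rule power_increasing) (use kr in auto)
    then have "(8 * real N) ^ l \<le> real k ^ l" using pw by linarith
    then have "(8 * real N) ^ Suc m \<le> real k ^ Suc m" using lm by simp
    then have k8: "8 * real N \<le> real k"
      by (rule power_le_imp_le_base) simp
    have "(real N / (real N + real k)) ^ l \<le> real N / (real N + real k)"
      by (rule pow_le_self) (use Nr l2 in auto)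
    also have "\<dots> \<le> real N / real k" using Nr kr by (intro divide_left_mono) auto
    also have "\<dots> \<le> 1/8" using k8 kr by (simp add: divide_le_eq)
    finally show ?thesis .
  qed
  show ?thesis unfolding Bnd_def using t1 t2 t3 by simp
qed

end


lemma poly_aux: "0 \<le> (n::real) \<Longrightarrow> (1/32) * (8 * (n + 1) * (n^2 + n)) \<le> n * (n^2 + 1)"
proof -
  assume n: "0 \<le> n"
  have e1: "(n + 1)^2 = n^2 + 2*n + 1" by (simp add: power2_eq_square algebra_simps)
  have e2: "(n - 1)^2 = n^2 - 2*n + 1" by (simp add: power2_eq_square algebra_simps)
  have id: "4 * (n^2+1) - (n+1)^2 = 2 * n^2 + (n-1)^2 + 2" by (simp add: power2_eq_square algebra_simps)
  have "0 \<le> 2 * n^2 + (n-1)^2 + 2" by (simp add: add_nonneg_nonneg)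
  then have h1: "(n+1)^2 \<le> 4 * (n^2+1)" using id by linarith
  have h2: "n * (n+1)^2 \<le> n * (4 * (n^2+1))" by (rule mult_left_mono[OF h1 n])
  have h3: "(1/32) * (8 * (n + 1) * (n^2 + n)) = n * (n+1)^2 / 4" by (simp add: power2_eq_square algebra_simps)
  have h4: "n * (4 * (n^2+1)) = 4 * (n * (n^2 + 1))" by (simp add: algebra_simps)
  show ?thesis using h2 h3 h4 by linarith
qed

lemma kp_pow:
  assumes "2 \<le> k" "1 \<le> l"
  shows "(real k powr (1 - 1 / real l)) ^ l = real k ^ (l - 1)"
proof -
  have kp: "0 < real k" using assms by simp
  have pos: "0 < real k powr (1 - 1 / real l)" using kp by simp
  have "(real k powr (1 - 1 / real l)) ^ l = (real k powr (1 - 1 / real l)) powr real l"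
    using powr_realpow[OF pos, of l] by simp
  also have "\<dots> = real k powr ((1 - 1 / real l) * real l)" by (rule powr_powr)
  also have "(1 - 1 / real l) * real l = real (l - 1)" using assms(2) by (simp add: field_simps of_nat_diff)
  also have "real k powr real (l - 1) = real k ^ (l - 1)" by (rule powr_realpow[OF kp])
  finally show ?thesis .
qed

theorem theoremA1:
  "\<exists>p0 > 0. \<exists>c > 0. \<forall>k l :: nat. k \<ge> 2 \<longrightarrow> l \<ge> 1 \<longrightarrow>
     (\<exists>d X R. finite X \<and> X \<noteq> {} \<and> X \<subseteq> Rd d \<and> OPT d k X > 0 \<and> valid_rule R \<and>
        measure_pmf.prob (kmpp d R X k l)
          {C. phi d X C \<ge> c * real k powr (1 - 1 / real l) * OPT d k X} \<ge> p0)"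
proof (rule exI[where x="1/2"], intro conjI)
  show "(0::real) < 1/2" by simp
  show "\<exists>c>0. \<forall>k l :: nat. k \<ge> 2 \<longrightarrow> l \<ge> 1 \<longrightarrow>
     (\<exists>d X R. finite X \<and> X \<noteq> {} \<and> X \<subseteq> Rd d \<and> OPT d k X > 0 \<and> valid_rule R \<and>
        measure_pmf.prob (kmpp d R X k l)
          {C. phi d X C \<ge> c * real k powr (1 - 1 / real l) * OPT d k X} \<ge> 1/2)"
  proof (rule exI[where x="1/32"], intro conjI allI impI)
    show "(0::real) < 1/32" by simp
    fix k l :: nat
    assume k2: "2 \<le> k" and l1: "1 \<le> l"
    define kp where "kp = real k powr (1 - 1 / real l)"
    define N0 where "N0 = nat \<lfloor>kp / 8\<rfloor>"
    have kp0: "0 \<le> kp" unfolding kp_def by simp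
    have fl0: "0 \<le> \<lfloor>kp / 8\<rfloor>" using kp0 by simp
    have N0r: "real N0 = real_of_int \<lfloor>kp / 8\<rfloor>" unfolding N0_def using fl0 by simp
    have N0le: "real N0 \<le> kp / 8" unfolding N0r by (rule of_int_floor_le)
    have N0gt: "kp / 8 < real N0 + 1" unfolding N0r by (rule real_of_int_floor_add_one_gt)
    show "\<exists>d X R. finite X \<and> X \<noteq> {} \<and> X \<subseteq> Rd d \<and> OPT d k X > 0 \<and> valid_rule R \<and>
        measure_pmf.prob (kmpp d R X k l)
          {C. phi d X C \<ge> 1/32 * real k powr (1 - 1 / real l) * OPT d k X} \<ge> 1/2"
    proof (cases "1 \<le> N0")
      case True
      define N where "N = N0"
      define D where "D = 4 * real k * (real N + 1) ^ 3"
      have D1: "1 \<le> D"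
      proof -
        have "1 \<le> (real N + 1) ^ 3" by (simp add: one_le_power)
        moreover have "1 \<le> 4 * real k" using k2 by simp
        ultimately have "1 * 1 \<le> 4 * real k * (real N + 1) ^ 3" by (intro mult_mono) auto
        then show ?thesis unfolding D_def by simp
      qed
      interpret I: kinst D k N using D1 k2 True by (unfold_locales) (auto simp: N_def)
      have l2: "2 \<le> l"
      proof (rule ccontr)
        assume "\<not> 2 \<le> l"
        then have "l = 1" using l1 by simp
        then have "kp = 1" unfolding kp_def using k2 by simp
        then have "N0 = 0" unfolding N0_def by simp
        then show False using True by simp
      qed
      have pw: "(8 * real N) ^ l \<le> real k ^ (l - 1)"
      proof -
        have "8 * real N \<le> kp" using N0le unfolding N_def by simp
        then have "(8 * real N) ^ l \<le> kp ^ l" by (rule power_mono) simp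
        also have "kp ^ l = real k ^ (l - 1)" unfolding kp_def by (rule kp_pow[OF k2 l1])
        finally show ?thesis .
      qed
      have bad: "measure_pmf.prob (kmpp I.dd I.RR I.XX k l) I.Bad \<le> 1/2"
        using I.first_bound[OF l1 k2] I.numeric[OF k2 l2 pw D_def] by linarith
      let ?Ev = "{C. phi I.dd I.XX C \<ge> 1/32 * kp * OPT I.dd k I.XX}"
      have sub: "- I.Bad \<subseteq> ?Ev"
      proof
        fix C assume "C \<in> - I.Bad"
        then have C: "C \<subseteq> I.Pset" "C \<noteq> {}" by (auto simp: I.Bad_def)
        have "kp * OPT I.dd k I.XX \<le> (8 * (real N + 1)) * (real N ^ 2 + real N)"
        proof (rule mult_mono)
          show "kp \<le> 8 * (real N + 1)" using N0gt unfolding N_def by simp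
          show "OPT I.dd k I.XX \<le> real N ^ 2 + real N" by (rule I.OPT_le)
          show "0 \<le> 8 * (real N + 1)" by simp
          show "0 \<le> OPT I.dd k I.XX" using I.OPT_ge by linarith
        qed
        then have "1/32 * kp * OPT I.dd k I.XX \<le> (1/32) * (8 * (real N + 1) * (real N ^ 2 + real N))"
          by simp
        also have "\<dots> \<le> real N * (real N ^ 2 + 1)" by (rule poly_aux) simp
        also have "\<dots> \<le> phi I.dd I.XX C" by (rule I.phi_good[OF C])
        finally show "C \<in> ?Ev" by simp
      qed
      have "1/2 \<le> 1 - measure_pmf.prob (kmpp I.dd I.RR I.XX k l) I.Bad" using bad by simp
      also have "\<dots> = measure_pmf.prob (kmpp I.dd I.RR I.XX k l) (- I.Bad)"
        using measure_pmf.prob_compl[of "I.Bad" "kmpp I.dd I.RR I.XX k l"] by (simp add: Compl_eq_Diff_UNIV)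
      also have "\<dots> \<le> measure_pmf.prob (kmpp I.dd I.RR I.XX k l) ?Ev"
        by (rule measure_pmf.finite_measure_mono[OF sub]) simp
      finally have P: "1/2 \<le> measure_pmf.prob (kmpp I.dd I.RR I.XX k l) ?Ev" .
      show ?thesis
      proof (intro exI conjI)
        show "finite I.XX" by simp
        show "I.XX \<noteq> {}" using k2 by (simp add: lessThan_empty_iff)
        show "I.XX \<subseteq> Rd I.dd" by (rule I.XX_sub_Rd)
        show "0 < OPT I.dd k I.XX" using I.OPT_ge by linarith
        show "valid_rule I.RR" by (rule I.valid_RR)
        show "1/2 \<le> measure_pmf.prob (kmpp I.dd I.RR I.XX k l)
          {C. phi I.dd I.XX C \<ge> 1/32 * real k powr (1 - 1 / real l) * OPT I.dd k I.XX}"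
          using P unfolding kp_def .
      qed
    next
      case False
      then have "N0 = 0" by simp
      then have kp8: "kp < 8" using N0gt by simp
      define D where "D = 32 * real k"
      have D1: "1 \<le> D" unfolding D_def using k2 by simp
      interpret I: kinst D k 1 using D1 k2 by (unfold_locales) auto
      let ?Ev = "{C. phi I.dd I.XX C \<ge> 1/32 * kp * OPT I.dd k I.XX}"
      have "measure_pmf.prob (kmpp I.dd I.RR I.XX k l) ?Ev = 1"
      proof (subst measure_pmf.prob_eq_1)
        show "AE C in measure_pmf (kmpp I.dd I.RR I.XX k l). C \<in> ?Ev"
        proof (rule AE_pmfI)
          fix C assume C: "C \<in> set_pmf (kmpp I.dd I.RR I.XX k l)"
          have "kp * OPT I.dd k I.XX \<le> 8 * 2"
          proof (rule mult_mono)
            show "kp \<le> 8" using kp8 by simp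
            show "OPT I.dd k I.XX \<le> 2" using I.OPT_le by simp
            show "0 \<le> (8::real)" by simp
            show "0 \<le> OPT I.dd k I.XX" using I.OPT_ge by linarith
          qed
          then have "1/32 * kp * OPT I.dd k I.XX \<le> 1" by simp
          also have "1 \<le> phi I.dd I.XX C" by (rule I.phi_supp_ge1[OF l1 k2 C])
          finally show "C \<in> ?Ev" by simp
        qed
      qed simp
      then have P: "1/2 \<le> measure_pmf.prob (kmpp I.dd I.RR I.XX k l) ?Ev" by simp
      show ?thesis
      proof (intro exI conjI)
        show "finite I.XX" by simp
        show "I.XX \<noteq> {}" using k2 by (simp add: lessThan_empty_iff)
        show "I.XX \<subseteq> Rd I.dd" by (rule I.XX_sub_Rd)
        show "0 < OPT I.dd k I.XX" using I.OPT_ge by linarith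
        show "valid_rule I.RR" by (rule I.valid_RR)
        show "1/2 \<le> measure_pmf.prob (kmpp I.dd I.RR I.XX k l)
          {C. phi I.dd I.XX C \<ge> 1/32 * real k powr (1 - 1 / real l) * OPT I.dd k I.XX}"
          using P unfolding kp_def .
      qed
    qed
  qed
qed



end
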